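(* In the semi-classical setting, with $\Theta_n,\Omega_n$ the polynomials defined in the context, for every $n\ge 1$: $$W p_n' = (\Omega_n - V)p_n - a_n\Theta_n p_{n-1},\qquad W p_{n-1}' = a_n\Theta_{n-1}p_n - (\Omega_n+V)p_{n-1},$$ $$W \varepsilon_n' = (\Omega_n + V)\varepsilon_n - a_n\Theta_n \varepsilon_{n-1},\qquad W \varepsilon_{n-1}' = a_n\Theta_{n-1}\varepsilon_n - (\Omega_n-V)\varepsilon_{n-1}.$$
   Context: Let $(\mu_k)_{k\ge 0}$ be complex numbers such that all Hankel determinants $\det(\mu_{i+j})_{0\le i,j\le n}$ are nonzero; $\mathcal L(x^k)=\mu_k$; $p_n(z)=\gamma_n z^n+\cdots$ ($\gamma_n\ne0$) orthonormal: $\mathcal L(p_np_m)=\delta_{n,m}$; recurrence $a_{n+1}p_{n+1}(z)=(z-b_n)p_n(z)-a_np_{n-1}(z)$, $p_{-1}=0$, $a_n=\gamma_{n-1}/\gamma_n$. $f(z)=\sum_{k\ge0}\mu_k z^{-k-1}$ (formal series); $p^{(1)}_{n-1}$ is the polynomial part of $fp_n$ and $\varepsilon_n=fp_n-p^{(1)}_{n-1}$. Semi-classical: polynomials $W\not\equiv0,V,U$ with $Wf'=2Vf+U$. For $n\ge1$, $\Theta_n = W(\varepsilon_n p_n' - \varepsilon_n' p_n) + 2V\varepsilon_n p_n$ and $\Omega_n = a_n W(\varepsilon_{n-1}p_n' - \varepsilon_n' p_{n-1}) + a_n V(\varepsilon_{n-1}p_n + \varepsilon_n p_{n-1})$; these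 are polynomials in $z$. $\Theta_0$ is defined by the same formula with $n=0$. Primes denote $d/dz$. *)

theory Defs
  imports "HOL-Computational_Algebra.Formal_Laurent_Series"
          "Jordan_Normal_Form.Determinant"
begin

text \<open>Formal series in the variable z are represented as formal Laurent series
  in w = 1/z (type complex fls): a polynomial in z has finitely many negative
  powers of w, and f(z) = sum mu_k z^(-k-1) is a power series in w.\<close>

definition zpoly :: "complex poly \<Rightarrow> complex fls" where
  "zpoly p = (\<Sum>k\<le>degree p. fls_const (coeff p k) * fls_X_inv ^ k)"

text \<open>d/dz = -w^2 d/dw\<close>
definition zderiv :: "complex fls \<Rightarrow> complex fls" where
  "zderiv F = - (fls_X ^ 2 * fls_deriv F)"

text \<open>Polynomial part (in z) of a series: the terms z^k, k >= 0.\<close>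
definition zpoly_part :: "complex fls \<Rightarrow> complex poly" where
  "zpoly_part F = fls_prpart F + [: fls_nth F 0 :]"

definition stieltjes :: "(nat \<Rightarrow> complex) \<Rightarrow> complex fls" where
  "stieltjes \<mu> = fls_X * fps_to_fls (Abs_fps \<mu>)"

definition Lfun :: "(nat \<Rightarrow> complex) \<Rightarrow> complex poly \<Rightarrow> complex" where
  "Lfun \<mu> q = (\<Sum>k\<le>degree q. coeff q k * \<mu> k)"

definition hankel_det :: "(nat \<Rightarrow> complex) \<Rightarrow> nat \<Rightarrow> complex" where
  "hankel_det \<mu> n = det (mat (n+1) (n+1) (\<lambda>(i,j). \<mu> (i+j)))"

text \<open>epsilon_n = f p_n - p^(1)_(n-1)\<close>
definition eps :: "(nat \<Rightarrow> complex) \<Rightarrow> (nat \<Rightarrow> complex poly) \<Rightarrow> nat \<Rightarrow> complex fls" where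
  "eps \<mu> p n = stieltjes \<mu> * zpoly (p n) - zpoly (zpoly_part (stieltjes \<mu> * zpoly (p n)))"

definition acoef :: "(nat \<Rightarrow> complex poly) \<Rightarrow> nat \<Rightarrow> complex" where
  "acoef p n = lead_coeff (p (n-1)) / lead_coeff (p n)"

definition Theta :: "(nat \<Rightarrow> complex) \<Rightarrow> (nat \<Rightarrow> complex poly) \<Rightarrow> complex poly \<Rightarrow> complex poly
   \<Rightarrow> nat \<Rightarrow> complex fls" where
  "Theta \<mu> p W V n =
     zpoly W * (eps \<mu> p n * zderiv (zpoly (p n)) - zderiv (eps \<mu> p n) * zpoly (p n))
     + 2 * zpoly V * eps \<mu> p n * zpoly (p n)"

definition Omega :: "(nat \<Rightarrow> complex) \<Rightarrow> (nat \<Rightarrow> complex poly) \<Rightarrow> complex poly \<Rightarrow> complex poly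
   \<Rightarrow> nat \<Rightarrow> complex fls" where
  "Omega \<mu> p W V n =
     fls_const (acoef p n) * zpoly W *
        (eps \<mu> p (n-1) * zderiv (zpoly (p n)) - zderiv (eps \<mu> p n) * zpoly (p (n-1)))
     + fls_const (acoef p n) * zpoly V *
        (eps \<mu> p (n-1) * zpoly (p n) + eps \<mu> p n * zpoly (p (n-1)))"

end

theory Submission
  imports Defs
begin


lemma zpoly_nth: "fls_nth (zpoly q) m = (if m \<le> 0 then coeff q (nat (-m)) else 0)"
proof -
  have "fls_nth (zpoly q) m = (\<Sum>k\<le>degree q. coeff q k * (if m = - int k then 1 else 0))"
    unfolding zpoly_def fls_nth_sum by simp
  also have "\<dots> = (\<Sum>k\<le>degree q. if k = nat (-m) \<and> m \<le> 0 then coeff q k else 0)"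
    by (rule sum.cong) auto
  also have "\<dots> = (if m \<le> 0 then coeff q (nat (-m)) else 0)"
    by (auto simp: sum.delta coeff_eq_0)
  finally show ?thesis .
qed

lemma stieltjes_nth: "fls_nth (stieltjes \<mu>) m = (if m \<ge> 1 then \<mu> (nat (m-1)) else 0)"
  unfolding stieltjes_def fls_X_times_conv_shift by auto

lemma S_zpoly_nth: "fls_nth (stieltjes \<mu> * zpoly q) m = (\<Sum>k\<le>degree q. coeff q k * fls_nth (stieltjes \<mu>) (m + int k))"
proof -
  have e: "stieltjes \<mu> * (fls_const c * fls_X_inv ^ k) = fls_const c * (fls_X_inv ^ k * stieltjes \<mu>)" for c k
    by (simp only: mult_ac)
  show ?thesis
    unfolding zpoly_def sum_distrib_left fls_nth_sum e
    by (simp only: fls_mult_const_nth fls_X_inv_power_times_conv_shift fls_shift_nth)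
qed

lemma zpoly_part_nth: "m \<le> 0 \<Longrightarrow> fls_nth (zpoly (zpoly_part F)) m = fls_nth F m"
  unfolding zpoly_nth zpoly_part_def by (auto simp: coeff_pCons split: nat.splits)

lemma zpoly_part_nth_pos: "m > 0 \<Longrightarrow> fls_nth (zpoly q) m = 0"
  unfolding zpoly_nth by auto

lemma Lfun_bound: "degree q \<le> N \<Longrightarrow> Lfun \<mu> q = (\<Sum>k\<le>N. coeff q k * \<mu> k)"
  unfolding Lfun_def by (rule sum.mono_neutral_left) (auto simp: coeff_eq_0)

lemma Lfun_add: "Lfun \<mu> (q + r) = Lfun \<mu> q + Lfun \<mu> r"
proof -
  let ?N = "max (degree q) (degree r)"
  have "Lfun \<mu> (q + r) = (\<Sum>k\<le>?N. coeff (q+r) k * \<mu> k)"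
    by (rule Lfun_bound) (meson degree_add_le max.cobounded1 max.cobounded2)
  also have "\<dots> = (\<Sum>k\<le>?N. coeff q k * \<mu> k) + (\<Sum>k\<le>?N. coeff r k * \<mu> k)"
    by (simp add: sum.distrib distrib_right)
  also have "\<dots> = Lfun \<mu> q + Lfun \<mu> r"
    using Lfun_bound[of q ?N \<mu>] Lfun_bound[of r ?N \<mu>] by simp
  finally show ?thesis .
qed

lemma Lfun_smult: "Lfun \<mu> (Polynomial.smult c q) = c * Lfun \<mu> q"
  unfolding Lfun_def by (simp add: sum_distrib_left mult.assoc)

lemma Lfun_zero[simp]: "Lfun \<mu> 0 = 0"
  unfolding Lfun_def by simp

lemma Lfun_monom: "Lfun \<mu> (monom 1 j * q) = (\<Sum>k\<le>degree q. coeff q k * \<mu> (j + k))"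
proof -
  have dg: "degree (monom (1::complex) j * q) \<le> j + degree q"
    using degree_mult_le[of "monom (1::complex) j" q] by (simp add: degree_monom_eq)
  have "Lfun \<mu> (monom 1 j * q) = (\<Sum>k\<le>j + degree q. coeff (monom 1 j * q) k * \<mu> k)"
    by (rule Lfun_bound[OF dg])
  also have "{..j + degree q} = {..<j} \<union> {j..j + degree q}" by auto
  also have "(\<Sum>k\<in>{..<j} \<union> {j..j + degree q}. coeff (monom 1 j * q) k * \<mu> k)
     = (\<Sum>k\<in>{..<j}. coeff (monom 1 j * q) k * \<mu> k) + (\<Sum>k\<in>{j..j + degree q}. coeff (monom 1 j * q) k * \<mu> k)"
    by (rule sum.union_disjoint) auto
  also have "(\<Sum>k\<in>{..<j}. coeff (monom 1 j * q) k * \<mu> k) = 0"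
    by (rule sum.neutral) (simp add: coeff_monom_mult)
  also have "(\<Sum>k\<in>{j..j + degree q}. coeff (monom 1 j * q) k * \<mu> k)
      = (\<Sum>k\<in>{0..degree q}. coeff (monom 1 j * q) (k + j) * \<mu> (k + j))"
    using sum.shift_bounds_cl_nat_ivl[of "\<lambda>k. coeff (monom 1 j * q) k * \<mu> k" 0 j "degree q"]
    by (simp add: add.commute)
  also have "\<dots> = (\<Sum>k\<le>degree q. coeff q k * \<mu> (j + k))"
    by (simp add: coeff_monom_mult atLeast0AtMost add.commute)
  finally show ?thesis by simp
qed

lemma Sq_nth_pos: "m \<ge> 1 \<Longrightarrow> fls_nth (stieltjes \<mu> * zpoly q) m = Lfun \<mu> (monom 1 (nat (m-1)) * q)"
proof -
  assume m: "m \<ge> 1"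
  have "nat (m + int x - 1) = nat (m - 1) + x" for x using m by arith
  then show ?thesis
    unfolding S_zpoly_nth Lfun_monom stieltjes_nth using m
    by (intro sum.cong) auto
qed



lemma p_nz:
  assumes orth: "\<And>m k. Lfun \<mu> (p m * p k) = (if m = k then 1 else 0)"
  shows "p m \<noteq> 0"
  using orth[of m m] by auto

lemma L_low:
  assumes deg: "\<And>m. degree (p m) = m"
    and orth: "\<And>m k. Lfun \<mu> (p m * p k) = (if m = k then 1 else 0)"
  shows "\<forall>q. (\<forall>k\<ge>d. coeff q k = 0) \<longrightarrow> d \<le> n \<longrightarrow> Lfun \<mu> (q * p n) = 0"
proof (induction d)
  case 0
  show ?case
  proof (intro allI impI)
    fix q :: "complex poly"
    assume "\<forall>k\<ge>0. coeff q k = 0"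
    then have "q = 0" by (intro poly_eqI) simp
    then show "Lfun \<mu> (q * p n) = 0" by simp
  qed
next
  case (Suc d)
  show ?case
  proof (intro allI impI)
    fix q :: "complex poly"
    assume q: "\<forall>k\<ge>Suc d. coeff q k = 0" and dn: "Suc d \<le> n"
    define c where "c = coeff q d / lead_coeff (p d)"
    define r where "r = q - Polynomial.smult c (p d)"
    have lc: "lead_coeff (p d) \<noteq> 0" using p_nz[OF orth] by simp
    have "coeff r k = 0" if "k \<ge> d" for k
    proof (cases "k = d")
      case True
      then show ?thesis using lc deg[of d] by (simp add: r_def c_def)
    next
      case False
      then have "k > degree (p d)" using that deg[of d] by simp
      then show ?thesis using q False that by (simp add: r_def coeff_eq_0)
    qed
    then have r0: "Lfun \<mu> (r * p n) = 0" using Suc.IH dn by auto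
    have "q * p n = r * p n + Polynomial.smult c (p d * p n)"
      by (simp add: r_def algebra_simps)
    then have "Lfun \<mu> (q * p n) = Lfun \<mu> (r * p n) + c * Lfun \<mu> (p d * p n)"
      by (simp add: Lfun_add Lfun_smult)
    also have "\<dots> = 0" using r0 orth[of d n] dn by simp
    finally show "Lfun \<mu> (q * p n) = 0" .
  qed
qed

lemma L_monom_low:
  assumes deg: "\<And>m. degree (p m) = m"
    and orth: "\<And>m k. Lfun \<mu> (p m * p k) = (if m = k then 1 else 0)"
    and "j < n"
  shows "Lfun \<mu> (monom 1 j * p n) = 0"
  using L_low[OF deg orth, of "Suc j" n] assms(3) by (auto simp: coeff_monom)

lemma L_monom_top:
  assumes deg: "\<And>m. degree (p m) = m"
    and orth: "\<And>m k. Lfun \<mu> (p m * p k) = (if m = k then 1 else 0)"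
  shows "Lfun \<mu> (monom 1 n * p n) = 1 / lead_coeff (p n)"
proof -
  define g where "g = lead_coeff (p n)"
  have g: "g \<noteq> 0" using p_nz[OF orth] by (simp add: g_def)
  define r where "r = p n - Polynomial.smult g (monom 1 n)"
  have "coeff r k = 0" if "k \<ge> n" for k
  proof (cases "k = n")
    case True
    then show ?thesis using deg[of n] by (simp add: r_def g_def)
  next
    case False
    then have "k > degree (p n)" using that deg[of n] by simp
    then show ?thesis using False by (simp add: r_def coeff_eq_0 coeff_monom)
  qed
  then have r0: "Lfun \<mu> (r * p n) = 0" using L_low[OF deg orth, of n n] by auto
  have "p n * p n = r * p n + Polynomial.smult g (monom 1 n * p n)"
    by (simp add: r_def algebra_simps)
  then have "1 = Lfun \<mu> (r * p n) + g * Lfun \<mu> (monom 1 n * p n)"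
    using orth[of n n] by (simp add: Lfun_add Lfun_smult)
  then show ?thesis using r0 g by (simp add: g_def field_simps)
qed

lemma eps_nth: "fls_nth (eps \<mu> p n) m = (if m \<ge> 1 then Lfun \<mu> (monom 1 (nat (m-1)) * p n) else 0)"
  unfolding eps_def fls_minus_nth
  by (auto simp: Sq_nth_pos zpoly_part_nth zpoly_part_nth_pos)

lemma eps_low:
  assumes deg: "\<And>m. degree (p m) = m"
    and orth: "\<And>m k. Lfun \<mu> (p m * p k) = (if m = k then 1 else 0)"
    and "m < int n + 1"
  shows "fls_nth (eps \<mu> p n) m = 0"
  unfolding eps_nth using L_monom_low[OF deg orth, of "nat (m-1)" n] assms(3) by auto

lemma eps_top:
  assumes deg: "\<And>m. degree (p m) = m"
    and orth: "\<And>m k. Lfun \<mu> (p m * p k) = (if m = k then 1 else 0)"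
  shows "fls_nth (eps \<mu> p n) (int n + 1) = 1 / lead_coeff (p n)"
  unfolding eps_nth using L_monom_top[OF deg orth, of n] by auto

lemma prod_low:
  assumes F: "\<And>i. i < a \<Longrightarrow> fls_nth F i = 0" and G: "\<And>j. j < b \<Longrightarrow> fls_nth G j = 0"
  shows "k < a + b \<Longrightarrow> fls_nth (F * G) k = (0::'a::comm_ring_1)"
    and "fls_nth (F * G) (a + b) = fls_nth F a * fls_nth G b"
proof -
  consider "F = 0" | "G = 0" | "F \<noteq> 0" "G \<noteq> 0" by blast
  then have "(k < a + b \<longrightarrow> fls_nth (F * G) k = 0) \<and> fls_nth (F * G) (a + b) = fls_nth F a * fls_nth G b"
  proof cases
    case 3
    have df: "fls_subdegree F \<ge> a" using fls_subdegree_geI[OF 3(1)] F by auto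
    have dg: "fls_subdegree G \<ge> b" using fls_subdegree_geI[OF 3(2)] G by auto
    have A: "k < a + b \<longrightarrow> fls_nth (F * G) k = 0"
      using fls_times_nth_eq0[of k F G] df dg by auto
    have B: "fls_nth (F * G) (a + b) = fls_nth F a * fls_nth G b"
    proof (cases "fls_subdegree F = a \<and> fls_subdegree G = b")
      case True
      then show ?thesis using fls_times_nth(2)[of F G "a+b"] by simp
    next
      case False
      then have "fls_nth F a = 0 \<or> fls_nth G b = 0"
        using df dg by (metis antisym fls_subdegree_leI)
      moreover have "fls_nth (F * G) (a + b) = 0"
        using fls_times_nth_eq0[of "a+b" F G] df dg False by auto
      ultimately show ?thesis by auto
    qed
    show ?thesis using A B by blast
  qed auto
  then show "k < a + b \<Longrightarrow> fls_nth (F * G) k = 0"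
    and "fls_nth (F * G) (a + b) = fls_nth F a * fls_nth G b" by auto
qed

lemma zpoly_low: "i < - int (degree q) \<Longrightarrow> fls_nth (zpoly q) i = 0"
  unfolding zpoly_nth by (auto simp: coeff_eq_0)

lemma zpoly_top: "fls_nth (zpoly q) (- int (degree q)) = lead_coeff q"
  unfolding zpoly_nth by auto

lemma zpoly_prod_pos:
  assumes "m > 0"
  shows "fls_nth (zpoly q * zpoly r) m = 0"
proof -
  have "fls_nth (zpoly q * zpoly r) m =
    (\<Sum>i=fls_subdegree (zpoly q)..m - fls_subdegree (zpoly r). fls_nth (zpoly q) i * fls_nth (zpoly r) (m - i))"
    by (rule fls_times_nth(2))
  also have "\<dots> = 0"
    by (rule sum.neutral) (use assms in \<open>auto simp: zpoly_nth\<close>)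
  finally show ?thesis .
qed



lemma alg:
  fixes A W V P Q E F P' Q' E' F' :: "'a::comm_ring_1"
  assumes h1: "A*(F*P - E*Q) = 1" and h2: "A*(F'*P + F*P' - E'*Q - E*Q') = 0"
  shows "W*P' = ((A*W*(F*P' - E'*Q) + A*V*(F*P + E*Q)) - V)*P - A*(W*(E*P' - E'*P) + 2*V*E*P)*Q"
    and "W*Q' = A*(W*(F*Q' - F'*Q) + 2*V*F*Q)*P - ((A*W*(F*P' - E'*Q) + A*V*(F*P + E*Q)) + V)*Q"
    and "W*E' = ((A*W*(F*P' - E'*Q) + A*V*(F*P + E*Q)) + V)*E - A*(W*(E*P' - E'*P) + 2*V*E*P)*F"
    and "W*F' = A*(W*(F*Q' - F'*Q) + 2*V*F*Q)*E - ((A*W*(F*P' - E'*Q) + A*V*(F*P + E*Q)) - V)*F"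
proof -
  define D where "D = A*(F*P - E*Q)"
  define D' where "D' = A*(F'*P + F*P' - E'*Q - E*Q')"
  have D: "D = 1" and D': "D' = 0" using h1 h2 by (simp_all add: D_def D'_def)
  have "((A*W*(F*P' - E'*Q) + A*V*(F*P + E*Q)) - V)*P - A*(W*(E*P' - E'*P) + 2*V*E*P)*Q
        = W*P' + (W*P' + V*P)*(D - 1)"
    by (simp add: D_def algebra_simps)
  then show "W*P' = ((A*W*(F*P' - E'*Q) + A*V*(F*P + E*Q)) - V)*P - A*(W*(E*P' - E'*P) + 2*V*E*P)*Q"
    using D by simp
  have "A*(W*(F*Q' - F'*Q) + 2*V*F*Q)*P - ((A*W*(F*P' - E'*Q) + A*V*(F*P + E*Q)) + V)*Q
        = W*Q' + W*Q'*(D - 1) - W*Q*D' + V*Q*(D - 1)"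
    by (simp add: D_def D'_def algebra_simps)
  then show "W*Q' = A*(W*(F*Q' - F'*Q) + 2*V*F*Q)*P - ((A*W*(F*P' - E'*Q) + A*V*(F*P + E*Q)) + V)*Q"
    using D D' by simp
  have "((A*W*(F*P' - E'*Q) + A*V*(F*P + E*Q)) + V)*E - A*(W*(E*P' - E'*P) + 2*V*E*P)*F
        = W*E' + W*E'*(D - 1) - V*E*(D - 1)"
    by (simp add: D_def algebra_simps)
  then show "W*E' = ((A*W*(F*P' - E'*Q) + A*V*(F*P + E*Q)) + V)*E - A*(W*(E*P' - E'*P) + 2*V*E*P)*F"
    using D by simp
  have "A*(W*(F*Q' - F'*Q) + 2*V*F*Q)*E - ((A*W*(F*P' - E'*Q) + A*V*(F*P + E*Q)) - V)*F
        = W*F' + W*F'*(D - 1) - W*F*D' - V*F*(D - 1)"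
    by (simp add: D_def D'_def algebra_simps)
  then show "W*F' = A*(W*(F*Q' - F'*Q) + 2*V*F*Q)*E - ((A*W*(F*P' - E'*Q) + A*V*(F*P + E*Q)) - V)*F"
    using D D' by simp
qed

lemma zderiv_mult: "zderiv (F * G) = F * zderiv G + zderiv F * G"
  unfolding zderiv_def by (simp add: algebra_simps)

lemma zderiv_diff: "zderiv (F - G) = zderiv F - zderiv G"
  unfolding zderiv_def by (simp add: algebra_simps)

lemma zderiv_add: "zderiv (F + G) = zderiv F + zderiv G"
  unfolding zderiv_def by (simp add: algebra_simps)

lemma zderiv_const_mult: "zderiv (fls_const c * F) = fls_const c * zderiv F"
  unfolding zderiv_def by (simp add: algebra_simps)

lemma zderiv_one: "zderiv 1 = 0"
  unfolding zderiv_def by simp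

lemma D_one:
  assumes deg: "\<And>m. degree (p m) = m"
    and orth: "\<And>m k. Lfun \<mu> (p m * p k) = (if m = k then 1 else 0)"
    and n: "n \<ge> 1"
  shows "fls_const (acoef p n) * (eps \<mu> p (n-1) * zpoly (p n) - eps \<mu> p n * zpoly (p (n-1))) = 1"
proof -
  define S where "S = stieltjes \<mu>"
  define P where "P = zpoly (p n)"
  define Q where "Q = zpoly (p (n-1))"
  define E where "E = eps \<mu> p n"
  define F where "F = eps \<mu> p (n-1)"
  have gn: "lead_coeff (p n) \<noteq> 0" and gk: "lead_coeff (p (n-1)) \<noteq> 0"
    using p_nz[OF orth] by auto
  have alg1: "F * P - E * Q = zpoly (zpoly_part (S * P)) * Q - zpoly (zpoly_part (S * Q)) * P"
    by (simp add: F_def E_def eps_def S_def P_def Q_def algebra_simps)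
  have Flow: "fls_nth F i = 0" if "i < int n" for i
    unfolding F_def by (rule eps_low[OF deg orth]) (use that n in auto)
  have Ftop: "fls_nth F (int n) = 1 / lead_coeff (p (n-1))"
    using eps_top[OF deg orth, of "n-1"] n unfolding F_def by (simp add: of_nat_diff)
  have Plow: "fls_nth P i = 0" if "i < - int n" for i
    unfolding P_def by (rule zpoly_low) (use that deg in auto)
  have Ptop: "fls_nth P (- int n) = lead_coeff (p n)"
    using zpoly_top[of "p n"] deg[of n] unfolding P_def by simp
  have Elow: "fls_nth E i = 0" if "i < int n + 1" for i
    unfolding E_def by (rule eps_low[OF deg orth]) (use that in auto)
  have Qlow: "fls_nth Q i = 0" if "i < - int (n-1)" for i
    unfolding Q_def by (rule zpoly_low) (use that deg in auto)
  have "fls_const (acoef p n) * (F * P - E * Q) = 1"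
    unfolding fls_eq_iff
  proof
    fix m :: int
    show "fls_nth (fls_const (acoef p n) * (F * P - E * Q)) m = fls_nth 1 m"
    proof (cases "m > 0")
      case True
      then show ?thesis unfolding alg1
        by (simp add: zpoly_prod_pos P_def Q_def)
    next
      case False
      have EQ: "fls_nth (E * Q) m = 0"
        using prod_low(1)[of "int n + 1" E "- int (n-1)" Q m, OF Elow Qlow] False n by auto
      have FP1: "fls_nth (F * P) m = 0" if "m < 0"
        using prod_low(1)[of "int n" F "- int n" P m, OF Flow Plow] that by auto
      have FP2: "fls_nth (F * P) 0 = lead_coeff (p n) / lead_coeff (p (n-1))"
        using prod_low(2)[of "int n" F "- int n" P, OF Flow Plow] Ftop Ptop by simp
      show ?thesis
      proof (cases "m = 0")
        case True
        then show ?thesis using EQ FP2 gn gk by (simp add: acoef_def)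
      next
        case False
        then show ?thesis using EQ FP1 \<open>\<not> m > 0\<close> by simp
      qed
    qed
  qed
  then show ?thesis by (simp add: F_def E_def P_def Q_def)
qed



lemma zderiv_fls_const: "zderiv (fls_const c) = 0"
  unfolding zderiv_def by simp

theorem mainTheorem2:
  fixes \<mu> :: "nat \<Rightarrow> complex" and p :: "nat \<Rightarrow> complex poly"
    and W V U :: "complex poly" and n :: nat
  assumes hankel: "\<And>m. hankel_det \<mu> m \<noteq> 0"
    and deg: "\<And>m. degree (p m) = m"
    and orth: "\<And>m k. Lfun \<mu> (p m * p k) = (if m = k then 1 else 0)"
    and W_nz: "W \<noteq> 0"
    and semiclassical: "zpoly W * zderiv (stieltjes \<mu>) = 2 * zpoly V * stieltjes \<mu> + zpoly U"
    and n: "n \<ge> 1"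
  shows
    "zpoly W * zderiv (zpoly (p n)) =
       (Omega \<mu> p W V n - zpoly V) * zpoly (p n)
       - fls_const (acoef p n) * Theta \<mu> p W V n * zpoly (p (n-1))
   \<and> zpoly W * zderiv (zpoly (p (n-1))) =
       fls_const (acoef p n) * Theta \<mu> p W V (n-1) * zpoly (p n)
       - (Omega \<mu> p W V n + zpoly V) * zpoly (p (n-1))
   \<and> zpoly W * zderiv (eps \<mu> p n) =
       (Omega \<mu> p W V n + zpoly V) * eps \<mu> p n
       - fls_const (acoef p n) * Theta \<mu> p W V n * eps \<mu> p (n-1)
   \<and> zpoly W * zderiv (eps \<mu> p (n-1)) =
       fls_const (acoef p n) * Theta \<mu> p W V (n-1) * eps \<mu> p n
       - (Omega \<mu> p W V n - zpoly V) * eps \<mu> p (n-1)"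
proof -
  have h1: "fls_const (acoef p n) * (eps \<mu> p (n-1) * zpoly (p n) - eps \<mu> p n * zpoly (p (n-1))) = 1"
    by (rule D_one[OF deg orth n])
  have "zderiv (fls_const (acoef p n) * (eps \<mu> p (n-1) * zpoly (p n) - eps \<mu> p n * zpoly (p (n-1)))) = 0"
    unfolding h1 by (rule zderiv_one)
  then have h2: "fls_const (acoef p n) * (zderiv (eps \<mu> p (n-1)) * zpoly (p n) + eps \<mu> p (n-1) * zderiv (zpoly (p n))
      - zderiv (eps \<mu> p n) * zpoly (p (n-1)) - eps \<mu> p n * zderiv (zpoly (p (n-1)))) = 0"
    unfolding zderiv_const_mult zderiv_diff zderiv_mult by (simp add: algebra_simps zderiv_fls_const)
  note a = alg[OF h1 h2, of "zpoly W" "zpoly V"]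
  show ?thesis
    unfolding Omega_def Theta_def
    by (intro conjI a)
qed

end
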